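(* Let $p\in[\tfrac12,1)$ and $q:=1-p$. Every $x\in\mathcal{M}_p:=\{\sum_{i\in\mathbb{N}}b_ipq^{i-1}: b_i\in\{0,1\},\ 1\le\sum_{i\in\mathbb{N}}b_i<\infty\}$ has a unique representation in $\mathcal{M}_p$, i.e. if $\sum_{i}b_ipq^{i-1}=\sum_i b_i'pq^{i-1}$ with both sequences $(b_i),(b_i')$ as in the definition of $\mathcal{M}_p$, then $b_i=b_i'$ for all $i$. *)

theory Defs
  imports "HOL-Analysis.Analysis"
begin

end

theory Submission
  imports Defs
begin

lemma geo_bound:
  fixes q :: real
  assumes "0 < q" "2*q \<le> 1" "m \<ge> 1" "N \<ge> m"
  shows "(\<Sum>i\<in>{m<..N}. q^(i-1)) \<le> q^(m-1) - q^(N-1)"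
  using assms(4)
proof (induction N rule: dec_induct)
  case base
  then show ?case by simp
next
  case (step n)
  have e: "{m<..Suc n} = insert (Suc n) {m<..n}" using step by auto
  have "q^n \<le> q^(n-1) - q^n"
  proof -
    have "q^n = q * q^(n-1)" using step assms(3) by (cases n) auto
    moreover have "2*(q*q^(n-1)) \<le> q^(n-1)"
      using assms(2) mult_right_mono[OF assms(2), of "q^(n-1)"] assms(1) by simp
    ultimately show ?thesis by simp
  qed
  then show ?case using step e by simp
qed

lemma key:
  fixes q :: real and b b' :: "nat \<Rightarrow> nat"
  assumes q: "0 < q" "2*q \<le> 1" and m: "m \<ge> 1" "m \<le> N"
    and bm: "b m = 1" "b' m = 0"
    and agree: "\<forall>i. 1 \<le> i \<and> i < m \<longrightarrow> b i = b' i"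
    and b1: "\<forall>i\<ge>1. b' i \<le> 1"
  shows "(\<Sum>i=1..N. real (b' i) * q^(i-1)) < (\<Sum>i=1..N. real (b i) * q^(i-1))"
proof -
  have split: "{1..N} = {1..<m} \<union> {m} \<union> {m<..N}" using m by auto
  have S: "\<And>c::nat\<Rightarrow>nat. (\<Sum>i=1..N. real (c i) * q^(i-1)) =
     (\<Sum>i\<in>{1..<m}. real (c i) * q^(i-1)) + real (c m) * q^(m-1) + (\<Sum>i\<in>{m<..N}. real (c i) * q^(i-1))"
  proof -
    fix c :: "nat\<Rightarrow>nat"
    show "(\<Sum>i=1..N. real (c i) * q^(i-1)) =
     (\<Sum>i\<in>{1..<m}. real (c i) * q^(i-1)) + real (c m) * q^(m-1) + (\<Sum>i\<in>{m<..N}. real (c i) * q^(i-1))"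
      unfolding split by (subst sum.union_disjoint; auto simp: sum.union_disjoint)+
  qed
  have A: "(\<Sum>i\<in>{1..<m}. real (b i) * q^(i-1)) = (\<Sum>i\<in>{1..<m}. real (b' i) * q^(i-1))"
    using agree by (intro sum.cong) auto
  have B: "(\<Sum>i\<in>{m<..N}. real (b' i) * q^(i-1)) \<le> (\<Sum>i\<in>{m<..N}. q^(i-1))"
    using b1 m q by (intro sum_mono) (auto intro: mult_left_le_one_le)
  have C: "0 \<le> (\<Sum>i\<in>{m<..N}. real (b i) * q^(i-1))"
    using q by (intro sum_nonneg) auto
  have D: "(\<Sum>i\<in>{m<..N}. q^(i-1)) < q^(m-1)"
    using geo_bound[OF q m] q by (smt (verit) zero_less_power)
  show ?thesis using S[of b] S[of b'] A B C D bm by simp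
qed

theorem lemma5:
  fixes p q :: real and b b' :: "nat \<Rightarrow> nat"
  assumes "1/2 \<le> p" and "p < 1" and "q = 1 - p"
    and "\<forall>i\<ge>1. b i \<in> {0, 1}" and "\<forall>i\<ge>1. b' i \<in> {0, 1}"
    and "finite {i. i \<ge> 1 \<and> b i \<noteq> 0}" and "{i. i \<ge> 1 \<and> b i \<noteq> 0} \<noteq> {}"
    and "finite {i. i \<ge> 1 \<and> b' i \<noteq> 0}" and "{i. i \<ge> 1 \<and> b' i \<noteq> 0} \<noteq> {}"
    and "(\<Sum>i\<in>{i. i \<ge> 1 \<and> b i \<noteq> 0}. real (b i) * p * q ^ (i - 1))
       = (\<Sum>i\<in>{i. i \<ge> 1 \<and> b' i \<noteq> 0}. real (b' i) * p * q ^ (i - 1))"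
  shows "\<forall>i\<ge>1. b i = b' i"
proof (rule ccontr)
  assume "\<not> (\<forall>i\<ge>1. b i = b' i)"
  then obtain j where j: "j \<ge> 1" "b j \<noteq> b' j" by auto
  define m where "m = (LEAST i. i \<ge> 1 \<and> b i \<noteq> b' i)"
  have m: "m \<ge> 1" "b m \<noteq> b' m" using LeastI[of "\<lambda>i. i \<ge> 1 \<and> b i \<noteq> b' i", OF conjI[OF j]]
    unfolding m_def by auto
  have agree: "\<forall>i. 1 \<le> i \<and> i < m \<longrightarrow> b i = b' i"
    using not_less_Least unfolding m_def by blast
  define N where "N = Max ({i. i \<ge> 1 \<and> b i \<noteq> 0} \<union> {i. i \<ge> 1 \<and> b' i \<noteq> 0})"
  have fin: "finite ({i. i \<ge> 1 \<and> b i \<noteq> 0} \<union> {i. i \<ge> 1 \<and> b' i \<noteq> 0})" using assms(6,8) by auto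
  have mN: "m \<le> N"
  proof -
    have "b m \<noteq> 0 \<or> b' m \<noteq> 0" using m by auto
    then show ?thesis unfolding N_def using m fin by (intro Max_ge) auto
  qed
  have conv: "\<And>c::nat\<Rightarrow>nat. finite {i. i \<ge> 1 \<and> c i \<noteq> 0} \<Longrightarrow> {i. i \<ge> 1 \<and> c i \<noteq> 0} \<subseteq> {1..N} \<Longrightarrow>
     (\<Sum>i\<in>{i. i \<ge> 1 \<and> c i \<noteq> 0}. real (c i) * p * q ^ (i - 1)) = p * (\<Sum>i=1..N. real (c i) * q^(i-1))"
  proof -
    fix c :: "nat\<Rightarrow>nat"
    assume f: "finite {i. i \<ge> 1 \<and> c i \<noteq> 0}" and s: "{i. i \<ge> 1 \<and> c i \<noteq> 0} \<subseteq> {1..N}"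
    have "(\<Sum>i\<in>{i. i \<ge> 1 \<and> c i \<noteq> 0}. real (c i) * p * q ^ (i - 1)) = (\<Sum>i=1..N. real (c i) * p * q ^ (i - 1))"
      using s by (intro sum.mono_neutral_left) auto
    also have "\<dots> = p * (\<Sum>i=1..N. real (c i) * q^(i-1))"
      by (simp add: sum_distrib_left algebra_simps)
    finally show "(\<Sum>i\<in>{i. i \<ge> 1 \<and> c i \<noteq> 0}. real (c i) * p * q ^ (i - 1)) = p * (\<Sum>i=1..N. real (c i) * q^(i-1))" .
  qed
  have s1: "{i. i \<ge> 1 \<and> b i \<noteq> 0} \<subseteq> {1..N}" unfolding N_def using fin
    by (auto intro: Max_ge)
  have s2: "{i. i \<ge> 1 \<and> b' i \<noteq> 0} \<subseteq> {1..N}" unfolding N_def using fin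
    by (auto intro: Max_ge)
  have p0: "p > 0" using assms(1) by simp
  have eq: "(\<Sum>i=1..N. real (b i) * q^(i-1)) = (\<Sum>i=1..N. real (b' i) * q^(i-1))"
    using assms(10) conv[OF assms(6) s1] conv[OF assms(8) s2] p0 by simp
  have q: "0 < q" "2*q \<le> 1" using assms(1-3) by auto
  have le1: "\<forall>i\<ge>1. b' i \<le> 1" "\<forall>i\<ge>1. b i \<le> 1" using assms(4,5) by auto
  have "b m = 1 \<and> b' m = 0 \<or> b m = 0 \<and> b' m = 1" using m assms(4,5)
    by (metis One_nat_def insertE singletonD)
  then show False
  proof
    assume h: "b m = 1 \<and> b' m = 0"
    show False using key[OF q m(1) mN, of b b'] h agree le1 eq by auto
  next
    assume h: "b m = 0 \<and> b' m = 1"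
    show False using key[OF q m(1) mN, of b' b] h agree le1 eq by auto
  qed
qed

end
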